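(* Let $R$ be any unital ring and $A\in GL_n(R)$. If some entry of $A$ is an idempotent, then $A$ can be reduced by a finite sequence of elementary row and column operations to a matrix of the form $\begin{bmatrix}1&0\\0&A'\end{bmatrix}$, i.e. with $1,1$ entry equal to $1$ and all other entries of the first row and first column equal to $0$.
   Context: An elementary row (resp. column) operation adds a left (resp. right) multiple by an element of $R$ of one row (resp. column) to a different row (resp. column); equivalently, multiplication on the left (resp. right) by a transvection $I+re_{ij}$ with $i\neq j$, $r\in R$. *)

theory Defs
  imports "Jordan_Normal_Form.Matrix"
begin

definition transvection :: "nat \<Rightarrow> nat \<Rightarrow> nat \<Rightarrow> 'a::ring_1 \<Rightarrow> 'a mat" where
  "transvection n i j r = mat n n (\<lambda>(k,l). if k = l then 1 else if k = i \<and> l = j then r else 0)"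

inductive elem_reduces :: "nat \<Rightarrow> 'a::ring_1 mat \<Rightarrow> 'a mat \<Rightarrow> bool" for n where
  refl: "elem_reduces n A A"
| row: "elem_reduces n A B \<Longrightarrow> i < n \<Longrightarrow> j < n \<Longrightarrow> i \<noteq> j \<Longrightarrow>
          elem_reduces n A (transvection n i j r * B)"
| col: "elem_reduces n A B \<Longrightarrow> i < n \<Longrightarrow> j < n \<Longrightarrow> i \<noteq> j \<Longrightarrow>
          elem_reduces n A (B * transvection n i j r)"

end

theory Submission
  imports Defs
begin


lemma transv_carrier[simp]: "transvection n a b r \<in> carrier_mat n n"
  by (simp add: transvection_def)

lemma transv_mult_carrier[simp]:
  "B \<in> carrier_mat n n \<Longrightarrow> transvection n a b r * B \<in> carrier_mat n n"
  "B \<in> carrier_mat n n \<Longrightarrow> B * transvection n a b r \<in> carrier_mat n n"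
  by (auto intro!: mult_carrier_mat[of _ n n _ n])

lemma T_left:
  fixes M :: "'a::ring_1 mat"
  assumes "M \<in> carrier_mat n n" "a<n" "b<n" "a\<noteq>b" "k<n" "m<n"
  shows "(transvection n a b r * M) $$ (k,m) = M $$ (k,m) + (if k = a then r * M $$ (b,m) else 0)"
proof -
  have "(transvection n a b r * M) $$ (k,m) = (\<Sum>p\<in>{0..<n}. transvection n a b r $$ (k,p) * M $$ (p,m))"
    using assms by (simp add: scalar_prod_def transvection_def)
  also have "\<dots> = (\<Sum>p\<in>{0..<n}. (if p = k then M$$(k,m) else 0) + (if p = b then (if k = a then r * M$$(b,m) else 0) else 0))"
    by (rule sum.cong) (use assms in \<open>auto simp: transvection_def\<close>)
  also have "\<dots> = M $$ (k,m) + (if k = a then r * M $$ (b,m) else 0)"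
    using assms by (simp add: sum.distrib)
  finally show ?thesis .
qed

lemma T_right:
  fixes M :: "'a::ring_1 mat"
  assumes "M \<in> carrier_mat n n" "a<n" "b<n" "a\<noteq>b" "k<n" "m<n"
  shows "(M * transvection n a b r) $$ (k,m) = M $$ (k,m) + (if m = b then M $$ (k,a) * r else 0)"
proof -
  have "(M * transvection n a b r) $$ (k,m) = (\<Sum>p\<in>{0..<n}. M $$ (k,p) * transvection n a b r $$ (p,m))"
    using assms by (simp add: scalar_prod_def transvection_def)
  also have "\<dots> = (\<Sum>p\<in>{0..<n}. (if p = m then M$$(k,m) else 0) + (if p = a then (if m = b then M$$(k,a) * r else 0) else 0))"
    by (rule sum.cong) (use assms in \<open>auto simp: transvection_def\<close>)
  also have "\<dots> = M $$ (k,m) + (if m = b then M $$ (k,a) * r else 0)"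
    using assms by (simp add: sum.distrib)
  finally show ?thesis .
qed

lemma er_carrier: "elem_reduces n A B \<Longrightarrow> A \<in> carrier_mat n n \<Longrightarrow> B \<in> carrier_mat n n"
  by (induction rule: elem_reduces.induct) (auto intro!: mult_carrier_mat[of _ n n _ n])

lemma transv_inv:
  assumes "a<n" "b<n" "a\<noteq>b"
  shows "transvection n a b (-r) * transvection n a b (r::'a::ring_1) = 1\<^sub>m n"
proof (rule eq_matI)
  fix k m assume "k < dim_row (1\<^sub>m n)" "m < dim_col (1\<^sub>m n)"
  then show "(transvection n a b (-r) * transvection n a b r) $$ (k,m) = 1\<^sub>m n $$ (k,m)"
    using assms by (subst T_left) (auto simp: transvection_def)
qed (auto simp: transvection_def)

lemma er_inv:
  assumes "elem_reduces n A B" "A \<in> carrier_mat n n" "X \<in> carrier_mat n n" "X * A = 1\<^sub>m n"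
  shows "\<exists>Y\<in>carrier_mat n n. Y * B = 1\<^sub>m n"
  using assms
proof (induction rule: elem_reduces.induct)
  case refl
  then show ?case by auto
next
  case (row A B i j r)
  then obtain Y where Y: "Y \<in> carrier_mat n n" "Y * B = 1\<^sub>m n" by auto
  have Bc: "B \<in> carrier_mat n n" using row er_carrier by auto
  have "(Y * transvection n i j (-r)) * (transvection n i j r * B) = Y * (transvection n i j (-r) * (transvection n i j r * B))"
    using Y Bc by (intro assoc_mult_mat[of _ n n _ n _ n]) auto
  also have "\<dots> = Y * ((transvection n i j (-r) * transvection n i j r) * B)"
    using Y Bc by (subst assoc_mult_mat[of _ n n _ n _ n]) auto
  also have "\<dots> = Y * (1\<^sub>m n * B)" by (simp only: transv_inv[OF row(2-4)])
  also have "\<dots> = 1\<^sub>m n" using Y Bc by simp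
  finally show ?case using Y by (intro bexI[of _ "Y * transvection n i j (-r)"]) auto
next
  case (col A B i j r)
  then obtain Y where Y: "Y \<in> carrier_mat n n" "Y * B = 1\<^sub>m n" by auto
  have Bc: "B \<in> carrier_mat n n" using col er_carrier by auto
  have "(transvection n i j (-r) * Y) * (B * transvection n i j r) = transvection n i j (-r) * (Y * (B * transvection n i j r))"
    using Y Bc by (intro assoc_mult_mat[of _ n n _ n _ n]) auto
  also have "\<dots> = transvection n i j (-r) * ((Y * B) * transvection n i j r)"
    using Y Bc by (subst assoc_mult_mat[of _ n n _ n _ n]) auto
  also have "\<dots> = transvection n i j (-r) * transvection n i j r" using Y Bc by (simp add: left_mult_one_mat[of _ n n])
  also have "\<dots> = 1\<^sub>m n" by (simp only: transv_inv[OF col(2-4)])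
  finally show ?case using Y by (intro bexI[of _ "transvection n i j (-r) * Y"]) auto
qed


lemma row_src:
  fixes A B :: "'a::ring_1 mat"
  assumes "elem_reduces n A B" "A \<in> carrier_mat n n" "finite S" "S \<subseteq> {0..<n} - {i}" "i<n"
  shows "\<exists>B'. elem_reduces n A B' \<and> (\<forall>k<n. \<forall>m<n. B' $$ (k,m) = B $$ (k,m) + (if k = i then (\<Sum>l\<in>S. c l * B $$ (l,m)) else 0))"
  using assms(3,4)
proof (induction S rule: finite_induct)
  case empty
  then show ?case using assms(1) by (intro exI[of _ B]) auto
next
  case (insert l S)
  then obtain B' where B': "elem_reduces n A B'" "\<forall>k<n. \<forall>m<n. B' $$ (k,m) = B $$ (k,m) + (if k = i then (\<Sum>l\<in>S. c l * B $$ (l,m)) else 0)" by auto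
  have Bc: "B' \<in> carrier_mat n n" using er_carrier[OF B'(1) assms(2)] .
  have l: "l < n" "l \<noteq> i" using insert by auto
  show ?case
  proof (intro exI conjI allI impI)
    show "elem_reduces n A (transvection n i l (c l) * B')" using B' l assms by (intro elem_reduces.row) auto
    fix k m assume km: "k < n" "m < n"
    show "(transvection n i l (c l) * B') $$ (k,m) = B $$ (k,m) + (if k = i then (\<Sum>l\<in>insert l S. c l * B $$ (l,m)) else 0)"
      using B'(2) km l Bc assms insert by (simp add: T_left algebra_simps)
  qed
qed

lemma row_tgt:
  fixes A B :: "'a::ring_1 mat"
  assumes "elem_reduces n A B" "A \<in> carrier_mat n n" "finite S" "S \<subseteq> {0..<n} - {i}" "i<n"
  shows "\<exists>B'. elem_reduces n A B' \<and> (\<forall>k<n. \<forall>m<n. B' $$ (k,m) = B $$ (k,m) + (if k \<in> S then c k * B $$ (i,m) else 0))"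
  using assms(3,4)
proof (induction S rule: finite_induct)
  case empty
  then show ?case using assms(1) by (intro exI[of _ B]) auto
next
  case (insert l S)
  then obtain B' where B': "elem_reduces n A B'" "\<forall>k<n. \<forall>m<n. B' $$ (k,m) = B $$ (k,m) + (if k \<in> S then c k * B $$ (i,m) else 0)" by auto
  have Bc: "B' \<in> carrier_mat n n" using er_carrier[OF B'(1) assms(2)] .
  have l: "l < n" "l \<noteq> i" "i \<notin> S" using insert by auto
  show ?case
  proof (intro exI conjI allI impI)
    show "elem_reduces n A (transvection n l i (c l) * B')" using B' l assms by (intro elem_reduces.row) auto
    fix k m assume km: "k < n" "m < n"
    show "(transvection n l i (c l) * B') $$ (k,m) = B $$ (k,m) + (if k \<in> insert l S then c k * B $$ (i,m) else 0)"
      using B'(2) km l Bc assms insert by (auto simp: T_left algebra_simps)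
  qed
qed

lemma col_src:
  fixes A B :: "'a::ring_1 mat"
  assumes "elem_reduces n A B" "A \<in> carrier_mat n n" "finite S" "S \<subseteq> {0..<n} - {j}" "j<n"
  shows "\<exists>B'. elem_reduces n A B' \<and> (\<forall>k<n. \<forall>m<n. B' $$ (k,m) = B $$ (k,m) + (if m = j then (\<Sum>l\<in>S. B $$ (k,l) * c l) else 0))"
  using assms(3,4)
proof (induction S rule: finite_induct)
  case empty
  then show ?case using assms(1) by (intro exI[of _ B]) auto
next
  case (insert l S)
  then obtain B' where B': "elem_reduces n A B'" "\<forall>k<n. \<forall>m<n. B' $$ (k,m) = B $$ (k,m) + (if m = j then (\<Sum>l\<in>S. B $$ (k,l) * c l) else 0)" by auto
  have Bc: "B' \<in> carrier_mat n n" using er_carrier[OF B'(1) assms(2)] .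
  have l: "l < n" "l \<noteq> j" using insert by auto
  show ?case
  proof (intro exI conjI allI impI)
    show "elem_reduces n A (B' * transvection n l j (c l))" using B' l assms by (intro elem_reduces.col) auto
    fix k m assume km: "k < n" "m < n"
    show "(B' * transvection n l j (c l)) $$ (k,m) = B $$ (k,m) + (if m = j then (\<Sum>l\<in>insert l S. B $$ (k,l) * c l) else 0)"
      using B'(2) km l Bc assms insert by (simp add: T_right algebra_simps)
  qed
qed

lemma col_tgt:
  fixes A B :: "'a::ring_1 mat"
  assumes "elem_reduces n A B" "A \<in> carrier_mat n n" "finite S" "S \<subseteq> {0..<n} - {j}" "j<n"
  shows "\<exists>B'. elem_reduces n A B' \<and> (\<forall>k<n. \<forall>m<n. B' $$ (k,m) = B $$ (k,m) + (if m \<in> S then B $$ (k,j) * c m else 0))"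
  using assms(3,4)
proof (induction S rule: finite_induct)
  case empty
  then show ?case using assms(1) by (intro exI[of _ B]) auto
next
  case (insert l S)
  then obtain B' where B': "elem_reduces n A B'" "\<forall>k<n. \<forall>m<n. B' $$ (k,m) = B $$ (k,m) + (if m \<in> S then B $$ (k,j) * c m else 0)" by auto
  have Bc: "B' \<in> carrier_mat n n" using er_carrier[OF B'(1) assms(2)] .
  have l: "l < n" "l \<noteq> j" "j \<notin> S" using insert by auto
  show ?case
  proof (intro exI conjI allI impI)
    show "elem_reduces n A (B' * transvection n j l (c l))" using B' l assms by (intro elem_reduces.col) auto
    fix k m assume km: "k < n" "m < n"
    show "(B' * transvection n j l (c l)) $$ (k,m) = B $$ (k,m) + (if m \<in> insert l S then B $$ (k,j) * c m else 0)"
      using B'(2) km l Bc assms insert by (auto simp: T_right algebra_simps)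
  qed
qed


lemma one_entry:
  fixes A B :: "'a::ring_1 mat"
  assumes er: "elem_reduces n A B" and Ac: "A \<in> carrier_mat n n" and ij: "i<n" "j<n" and one: "B $$ (i,j) = 1"
  shows "\<exists>B. elem_reduces n A B \<and> B $$ (0, 0) = 1 \<and>
           (\<forall>k. 0 < k \<and> k < n \<longrightarrow> B $$ (0, k) = 0 \<and> B $$ (k, 0) = 0)"
proof -
  have n0: "0 < n" using ij by auto
  have Bc: "B \<in> carrier_mat n n" using er_carrier[OF er Ac] .
  obtain B1 where B1: "elem_reduces n A B1" "B1 $$ (0,j) = 1"
  proof (cases "i = 0")
    case True
    then show ?thesis using that er one by auto
  next
    case False
    have "elem_reduces n A (transvection n 0 i (1 - B $$ (0,j)) * B)"
      using er False ij n0 by (intro elem_reduces.row) auto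
    moreover have "(transvection n 0 i (1 - B $$ (0,j)) * B) $$ (0,j) = 1"
      using Bc False ij n0 one by (simp add: T_left algebra_simps)
    ultimately show ?thesis using that by blast
  qed
  have B1c: "B1 \<in> carrier_mat n n" using er_carrier[OF B1(1) Ac] .
  obtain B2 where B2: "elem_reduces n A B2" "B2 $$ (0,0) = 1"
  proof (cases "j = 0")
    case True
    then show ?thesis using that B1 by auto
  next
    case False
    have "elem_reduces n A (B1 * transvection n j 0 (1 - B1 $$ (0,0)))"
      using B1 False ij n0 by (intro elem_reduces.col) auto
    moreover have "(B1 * transvection n j 0 (1 - B1 $$ (0,0))) $$ (0,0) = 1"
      using B1c False ij n0 B1 by (simp add: T_right algebra_simps)
    ultimately show ?thesis using that by blast
  qed
  have sub: "{1..<n} \<subseteq> {0..<n} - {0}" by auto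
  obtain B3 where B3: "elem_reduces n A B3"
    "\<forall>k<n. \<forall>m<n. B3 $$ (k,m) = B2 $$ (k,m) + (if m \<in> {1..<n} then B2 $$ (k,0) * (- B2 $$ (0,m)) else 0)"
    using col_tgt[OF B2(1) Ac finite_atLeastLessThan sub n0, of "\<lambda>m. - B2 $$ (0,m)"] by blast
  obtain B4 where B4: "elem_reduces n A B4"
    "\<forall>k<n. \<forall>m<n. B4 $$ (k,m) = B3 $$ (k,m) + (if k \<in> {1..<n} then (- B3 $$ (k,0)) * B3 $$ (0,m) else 0)"
    using row_tgt[OF B3(1) Ac finite_atLeastLessThan sub n0, of "\<lambda>k. - B3 $$ (k,0)"] by blast
  show ?thesis
  proof (intro exI conjI allI impI)
    show "elem_reduces n A B4" by (rule B4(1))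
    show "B4 $$ (0,0) = 1" using B4(2) B3(2) B2(2) n0 by simp
    fix k assume k: "0 < k \<and> k < n"
    show "B4 $$ (0,k) = 0" using B4(2) B3(2) B2(2) n0 k by simp
    show "B4 $$ (k,0) = 0" using B4(2) B3(2) B2(2) n0 k by simp
  qed
qed


theorem lemma2p3:
  fixes A :: "'a::ring_1 mat" and n i j :: nat
  assumes "A \<in> carrier_mat n n"
    and "invertible_mat A"
    and "i < n" and "j < n"
    and "A $$ (i, j) * A $$ (i, j) = A $$ (i, j)"
  shows "\<exists>B. elem_reduces n A B \<and> B $$ (0, 0) = 1 \<and>
           (\<forall>k. 0 < k \<and> k < n \<longrightarrow> B $$ (0, k) = 0 \<and> B $$ (k, 0) = 0)"
proof -
  note Ac = assms(1)
  define e where "e = A $$ (i, j)"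
  have ee: "e * e = e" using assms(5) e_def by simp
  obtain X where X: "A * X = 1\<^sub>m (dim_row A)" "X * A = 1\<^sub>m (dim_row X)"
    using assms(2) unfolding invertible_mat_def inverts_mat_def by blast
  have "dim_col X = n" using X(1) Ac by (metis carrier_matD(1) dim_col_mat(1) index_mult_mat(3) index_one_mat(3))
  moreover have "dim_row X = n" using X(2) Ac by (metis carrier_matD(2) index_mult_mat(3) index_one_mat(3))
  ultimately have Xc: "X \<in> carrier_mat n n" "X * A = 1\<^sub>m n" using X(2) by auto
  have subj: "{0..<n} - {j} \<subseteq> {0..<n} - {j}" "finite ({0..<n} - {j})" by auto
  have subi: "{0..<n} - {i} \<subseteq> {0..<n} - {i}" "finite ({0..<n} - {i})" by auto
  obtain A1 where A1: "elem_reduces n A A1"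
    "\<forall>k<n. \<forall>m<n. A1 $$ (k,m) = A $$ (k,m) + (if m \<in> {0..<n} - {j} then A $$ (k,j) * (- (e * A $$ (i,m))) else 0)"
    using col_tgt[OF elem_reduces.refl Ac subj(2) subj(1) assms(4), of "\<lambda>m. - (e * A $$ (i,m))"] by blast
  have A1ij: "A1 $$ (i,j) = e" using A1(2) assms e_def by simp
  have A1kj: "\<And>k. k < n \<Longrightarrow> A1 $$ (k,j) = A $$ (k,j)" using A1(2) assms by simp
  have A1im: "\<And>m. m < n \<Longrightarrow> m \<noteq> j \<Longrightarrow> e * A1 $$ (i,m) = 0"
  proof -
    fix m assume m: "m < n" "m \<noteq> j"
    have "A1 $$ (i,m) = A $$ (i,m) + A $$ (i,j) * (- (e * A $$ (i,m)))"
      using A1(2) m assms by simp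
    also have "\<dots> = A $$ (i,m) - (e * e) * A $$ (i,m)"
      unfolding e_def[symmetric] by (simp add: mult.assoc)
    also have "\<dots> = A $$ (i,m) - e * A $$ (i,m)" using ee by simp
    finally have eq: "A1 $$ (i,m) = A $$ (i,m) - e * A $$ (i,m)" .
    have "e * A1 $$ (i,m) = e * A $$ (i,m) - (e * e) * A $$ (i,m)"
      unfolding eq by (simp add: right_diff_distrib mult.assoc)
    then show "e * A1 $$ (i,m) = 0" using ee by simp
  qed
  obtain A2 where A2: "elem_reduces n A A2"
    "\<forall>k<n. \<forall>m<n. A2 $$ (k,m) = A1 $$ (k,m) + (if k \<in> {0..<n} - {i} then (- (A1 $$ (k,j) * e)) * A1 $$ (i,m) else 0)"
    using row_tgt[OF A1(1) Ac subi(2) subi(1) assms(3), of "\<lambda>k. - (A1 $$ (k,j) * e)"] by blast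
  have A2ij: "A2 $$ (i,j) = e" using A2(2) A1ij assms by simp
  have A2kj: "\<And>k. k < n \<Longrightarrow> k \<noteq> i \<Longrightarrow> A2 $$ (k,j) * e = 0"
  proof -
    fix k assume k: "k < n" "k \<noteq> i"
    have "A2 $$ (k,j) * e = A1 $$ (k,j) * e - A1 $$ (k,j) * (e * e) * e"
      using A2(2) k assms A1ij by (simp add: algebra_simps)
    then show "A2 $$ (k,j) * e = 0" using ee by (simp add: mult.assoc)
  qed
  have A2c: "A2 \<in> carrier_mat n n" using er_carrier[OF A2(1) Ac] .
  obtain Y where Y: "Y \<in> carrier_mat n n" "Y * A2 = 1\<^sub>m n" using er_inv[OF A2(1) Ac Xc] by blast
  have "(Y * A2) $$ (j,j) = (\<Sum>p\<in>{0..<n}. Y $$ (j,p) * A2 $$ (p,j))"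
    using Y(1) A2c assms by (simp add: scalar_prod_def)
  also have "\<dots> = Y $$ (j,i) * A2 $$ (i,j) + (\<Sum>p\<in>{0..<n} - {i}. Y $$ (j,p) * A2 $$ (p,j))"
    using assms by (subst sum.remove[of _ i]) auto
  finally have s1: "Y $$ (j,i) * e + (\<Sum>p\<in>{0..<n} - {i}. Y $$ (j,p) * A2 $$ (p,j)) = 1"
    using Y assms A2ij by simp
  have "(Y $$ (j,i) * e + (\<Sum>p\<in>{0..<n} - {i}. Y $$ (j,p) * A2 $$ (p,j))) * e
      = Y $$ (j,i) * (e * e) + (\<Sum>p\<in>{0..<n} - {i}. Y $$ (j,p) * (A2 $$ (p,j) * e))"
    by (simp add: algebra_simps sum_distrib_right)
  also have "\<dots> = Y $$ (j,i) * e" using A2kj ee by simp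
  finally have "Y $$ (j,i) * e = e" using s1 by simp
  with s1 have s2: "(\<Sum>p\<in>{0..<n} - {i}. Y $$ (j,p) * A2 $$ (p,j)) = 1 - e"
    by (metis add_diff_cancel_left')
  obtain A3 where A3: "elem_reduces n A A3"
    "\<forall>k<n. \<forall>m<n. A3 $$ (k,m) = A2 $$ (k,m) + (if k = i then (\<Sum>l\<in>{0..<n} - {i}. Y $$ (j,l) * A2 $$ (l,m)) else 0)"
    using row_src[OF A2(1) Ac subi(2) subi(1) assms(3), of "\<lambda>l. Y $$ (j,l)"] by blast
  have "A3 $$ (i,j) = 1" using A3(2) assms A2ij s2 by simp
  then show ?thesis using one_entry[OF A3(1) Ac assms(3,4)] by blast
qed

end
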